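(* Let $f:\mathcal D_n^+\to\mathcal D_n^+$ be weakly monotonic (non-decreasing or non-increasing for the entrywise order on diagonal matrices) and bounded from below and above, i.e. there are $0<\delta_m\le\delta_M$ with $\delta_mI_n\le f(\Delta)\le\delta_MI_n$ for all $\Delta$. Suppose $f$ is stable and satisfies $d_s(f(\Delta),f(\Delta'))<d_s(\Delta,\Delta')$ for all $\Delta\ne\Delta'$ in $\mathcal D_n^+$. Then there exists a unique $\Delta^*\in\mathcal D_n^+$ with $\Delta^*=f(\Delta^* )$.
   Context: $\mathcal D_n^+$ is the set of $n\times n$ diagonal matrices with positive diagonal entries. $d_s(\Delta,\Delta')=\max_i\frac{|\Delta_i-\Delta'_i|}{\sqrt{\Delta_i\Delta'_i}}$ (stable semi-metric). A map $f:\mathcal D_n^+\to\mathcal D_n^+$ is stable if $d_s(f(\Delta),f(\Delta'))\le d_s(\Delta,\Delta')$ for all $\Delta,\Delta'$. *)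

theory Defs
  imports "HOL-Analysis.Analysis"
begin

text \<open>A positive diagonal n x n matrix is represented by its diagonal, a vector in real^n
  with all entries positive. The index type 'n is finite, n = CARD('n).\<close>

definition posdiag :: "(real ^ 'n) set" where
  "posdiag = {D. \<forall>i. D $ i > 0}"

definition d_s :: "real ^ 'n \<Rightarrow> real ^ 'n \<Rightarrow> real" where
  "d_s D D' = Max (range (\<lambda>i. \<bar>D $ i - D' $ i\<bar> / sqrt (D $ i * D' $ i)))"

definition diag_le :: "real ^ 'n \<Rightarrow> real ^ 'n \<Rightarrow> bool" where
  "diag_le D D' \<longleftrightarrow> (\<forall>i. D $ i \<le> D' $ i)"

definition stable_map :: "(real ^ 'n \<Rightarrow> real ^ 'n) \<Rightarrow> bool" where
  "stable_map f \<longleftrightarrow> (\<forall>D\<in>posdiag. \<forall>D'\<in>posdiag. d_s (f D) (f D') \<le> d_s D D')"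

definition weakly_monotonic :: "(real ^ 'n \<Rightarrow> real ^ 'n) \<Rightarrow> bool" where
  "weakly_monotonic f \<longleftrightarrow>
     (\<forall>D\<in>posdiag. \<forall>D'\<in>posdiag. diag_le D D' \<longrightarrow> diag_le (f D) (f D')) \<or>
     (\<forall>D\<in>posdiag. \<forall>D'\<in>posdiag. diag_le D D' \<longrightarrow> diag_le (f D') (f D))"

end

theory Submission
  imports Defs "HOL-Analysis.Analysis"
begin

lemma ds_ge:
  fixes D D' :: "real ^ 'n"
  shows "\<bar>D $ i - D' $ i\<bar> / sqrt (D $ i * D' $ i) \<le> d_s D D'"
  unfolding d_s_def by (rule Max_ge) auto

lemma ds_witness:
  fixes D D' :: "real ^ 'n"
  obtains i where "d_s D D' = \<bar>D $ i - D' $ i\<bar> / sqrt (D $ i * D' $ i)"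
proof -
  have "d_s D D' \<in> range (\<lambda>i. \<bar>D $ i - D' $ i\<bar> / sqrt (D $ i * D' $ i))"
    unfolding d_s_def by (rule Max_in) auto
  then show ?thesis using that by auto
qed

lemma ds_le_norm:
  fixes D D' :: "real ^ 'n"
  assumes a: "0 < a" and lo: "\<forall>i. a \<le> D $ i \<and> a \<le> D' $ i"
  shows "d_s D D' \<le> norm (D - D') / a"
proof -
  obtain i where i: "d_s D D' = \<bar>D $ i - D' $ i\<bar> / sqrt (D $ i * D' $ i)"
    by (rule ds_witness)
  have "a * a \<le> D $ i * D' $ i" using lo a by (meson less_le_trans mult_mono' order.strict_implies_order)
  then have "sqrt (a*a) \<le> sqrt (D $ i * D' $ i)" by (rule real_sqrt_le_mono)
  then have s: "a \<le> sqrt (D $ i * D' $ i)" using a by simp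
  have "\<bar>D $ i - D' $ i\<bar> / sqrt (D $ i * D' $ i) \<le> \<bar>D $ i - D' $ i\<bar> / a"
    using s a by (simp add: frac_le)
  also have "\<dots> \<le> norm (D - D') / a"
    using component_le_norm_cart[of "D - D'" i] a by (simp add: divide_right_mono)
  finally show ?thesis using i by simp
qed

lemma comp_le_ds:
  fixes D D' :: "real ^ 'n"
  assumes p: "D $ i > 0" "D' $ i > 0" and hi: "D $ i \<le> b" "D' $ i \<le> b"
  shows "\<bar>D $ i - D' $ i\<bar> \<le> b * d_s D D'"
proof -
  have sp: "sqrt (D $ i * D' $ i) > 0" using p by simp
  have "D $ i * D' $ i \<le> b * b" using p hi by (simp add: mult_mono)
  then have "sqrt (D $ i * D' $ i) \<le> sqrt (b*b)" by (rule real_sqrt_le_mono)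
  then have sb: "sqrt (D $ i * D' $ i) \<le> b" using p hi by simp
  have r: "\<bar>D $ i - D' $ i\<bar> / sqrt (D $ i * D' $ i) \<le> d_s D D'" by (rule ds_ge)
  have dsn: "0 \<le> d_s D D'" using r sp by (meson abs_ge_zero divide_nonneg_pos order_trans)
  have "\<bar>D $ i - D' $ i\<bar> \<le> sqrt (D $ i * D' $ i) * d_s D D'"
    using r sp by (simp add: divide_le_eq mult.commute)
  also have "\<dots> \<le> b * d_s D D'" using sb dsn by (simp add: mult_right_mono)
  finally show ?thesis .
qed

theorem theorem3:
  fixes f :: "real ^ 'n \<Rightarrow> real ^ 'n" and \<delta>m \<delta>M :: real
  assumes maps: "\<forall>D\<in>posdiag. f D \<in> posdiag"
    and mono: "weakly_monotonic f"
    and dpos: "0 < \<delta>m" and dle: "\<delta>m \<le> \<delta>M"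
    and bounds: "\<forall>D\<in>posdiag. \<forall>i. \<delta>m \<le> f D $ i \<and> f D $ i \<le> \<delta>M"
    and stable: "stable_map f"
    and strict: "\<forall>D\<in>posdiag. \<forall>D'\<in>posdiag. D \<noteq> D' \<longrightarrow> d_s (f D) (f D') < d_s D D'"
  shows "\<exists>!D. D \<in> posdiag \<and> f D = D"
proof -
  define K where "K = cbox (vec \<delta>m :: real ^ 'n) (vec \<delta>M)"
  have Kmem: "D \<in> K \<longleftrightarrow> (\<forall>i. \<delta>m \<le> D $ i \<and> D $ i \<le> \<delta>M)" for D
    unfolding K_def mem_box_cart by simp
  have Kpos: "D \<in> K \<Longrightarrow> D \<in> posdiag" for D
    unfolding Kmem posdiag_def using dpos by (auto intro: less_le_trans)
  define L where "L = real CARD('n) * (\<delta>M / \<delta>m)"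
  have L0: "0 \<le> L" unfolding L_def using dpos dle by simp
  have lip: "L-lipschitz_on K f"
  proof (rule lipschitz_onI[OF _ L0])
    fix x y assume x: "x \<in> K" and y: "y \<in> K"
    have xp: "x \<in> posdiag" and yp: "y \<in> posdiag" using x y Kpos by auto
    have dsxy: "d_s x y \<le> norm (x - y) / \<delta>m"
      by (rule ds_le_norm[OF dpos]) (use x y Kmem in auto)
    have st: "d_s (f x) (f y) \<le> d_s x y" using stable xp yp unfolding stable_map_def by auto
    have ci: "\<bar>(f x - f y) $ i\<bar> \<le> (\<delta>M / \<delta>m) * norm (x - y)" for i
    proof -
      have "\<bar>f x $ i - f y $ i\<bar> \<le> \<delta>M * d_s (f x) (f y)"
        apply (rule comp_le_ds)
        using bounds xp yp dpos by (auto intro: less_le_trans)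
      also have "\<dots> \<le> \<delta>M * (norm (x - y) / \<delta>m)"
        using st dsxy dpos dle by (intro mult_left_mono) auto
      finally show ?thesis by simp
    qed
    have "norm (f x - f y) \<le> (\<Sum>i\<in>UNIV. \<bar>(f x - f y) $ i\<bar>)" by (rule norm_le_l1_cart)
    also have "\<dots> \<le> (\<Sum>i\<in>(UNIV::'n set). (\<delta>M / \<delta>m) * norm (x - y))"
      by (rule sum_mono) (rule ci)
    also have "\<dots> = L * norm (x - y)" unfolding L_def by simp
    finally show "dist (f x) (f y) \<le> L * dist x y" by (simp add: dist_norm)
  qed
  have "vec \<delta>m \<in> K" unfolding Kmem using dle by simp
  then have Kne: "K \<noteq> {}" by auto
  have fim: "f \<in> K \<rightarrow> K" using bounds Kpos Kmem by auto
  obtain x where x: "x \<in> K" "f x = x"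
    using brouwer[OF _ _ Kne lipschitz_on_continuous_on[OF lip] fim] unfolding K_def
    by (auto simp: convex_box compact_cbox)
  show ?thesis
  proof (rule ex1I[of _ x])
    show "x \<in> posdiag \<and> f x = x" using x Kpos by auto
  next
    fix y assume y: "y \<in> posdiag \<and> f y = y"
    show "y = x"
    proof (rule ccontr)
      assume "y \<noteq> x"
      moreover have "x \<in> posdiag" using x Kpos by auto
      ultimately have "d_s (f y) (f x) < d_s y x" using strict y by blast
      then show False using y x by simp
    qed
  qed
qed

end
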